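(* Let $G$ be the $m\times n$ triangle lattice tube graph with $n\ge 4$ and $m\ge 3$. Then $T_1(G)=2$.
   Context: The $m\times n$ triangular lattice graph is $P_m\times P_n$ (Cartesian product of paths; vertices are integer points $(i,j)$, $1\le i\le n$, $1\le j\le m$) together with the diagonal edges joining $(i,j)$ and $(i+1,j+1)$. The $m\times n$ triangle lattice tube graph is obtained from it by identifying, in each of the $m$ rows, the first vertex $(1,j)$ with the last vertex $(n,j)$ (so the lattice wraps into a tube; equivalently its vertex set is $\mathbb{Z}_{n-1}\times\{1,\dots,m\}$ with edges $(i,j)(i+1,j)$, $(i,j)(i,j+1)$, $(i,j)(i+1,j+1)$). Fix a set $\Sigma$ of symbols (bond-edge types) and a disjoint copy $\hat\Sigma=\{\hat a:a\in\Sigma\}$ with $\hat{\hat a}=a$; elements of $\Sigma\cup\hat\Sigma$ are cohesive-end types. A tile is a finite multiset of cohesive-end types. A pot is a finite set $P$ of tiles such that whenever $x$ occurs in a tile of $P$, $\hat x$ occurs in some tile of $P$; $\#P$ is its number of tiles. Graphs are finite, loops and multiple edges allowed. An assembly design of a graph $H$ labels the half-edges of $H$ by cohesive-end types so that the two half-edges of each edge receive complementary labels $x,\hat x$; $t_v$ is the multiset of labels at $v$, $P_\lambda(H)=\{t_v\}$, and $P$ realizes $H$ ($H\in\mathcal{O}(P)$) if some assembly design $\lambda$ has $P_\lambda(H)\subseteq P$. $T_1(G)=\min\{\#P: G\in\mathcal{O}(P)\}$. *)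

theory Defs
  imports Main "HOL-Library.Multiset"
begin

text \<open>Cohesive-end types over a symbol type: a symbol a or its complement hat a.\<close>
datatype 's cend = Sym 's | Hat 's

fun hat :: "'s cend \<Rightarrow> 's cend" where
  "hat (Sym a) = Hat a"
| "hat (Hat a) = Sym a"

type_synonym 's tile = "'s cend multiset"

definition pot :: "'s tile set \<Rightarrow> bool" where
  "pot P \<longleftrightarrow> finite P \<and> (\<forall>t\<in>P. \<forall>x. x \<in># t \<longrightarrow> (\<exists>t'\<in>P. hat x \<in># t'))"

text \<open>A finite multigraph (loops and multiple edges allowed): vertex set V, edge set E,
and each edge e has ends (fst (ends e), snd (ends e)). Half-edges of e are (e,False) at
fst (ends e) and (e,True) at snd (ends e).\<close>
record ('v, 'e) mgraph =
  verts :: "'v set"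
  edges :: "'e set"
  ends :: "'e \<Rightarrow> 'v \<times> 'v"

definition hend :: "('v, 'e) mgraph \<Rightarrow> 'e \<times> bool \<Rightarrow> 'v" where
  "hend G h = (if snd h then snd (ends G (fst h)) else fst (ends G (fst h)))"

definition tile_at :: "('v, 'e) mgraph \<Rightarrow> ('e \<times> bool \<Rightarrow> 's cend) \<Rightarrow> 'v \<Rightarrow> 's tile" where
  "tile_at G lam v = image_mset lam (mset_set {h. fst h \<in> edges G \<and> hend G h = v})"

definition assembly_design :: "('v, 'e) mgraph \<Rightarrow> ('e \<times> bool \<Rightarrow> 's cend) \<Rightarrow> bool" where
  "assembly_design G lam \<longleftrightarrow> (\<forall>e\<in>edges G. lam (e, True) = hat (lam (e, False)))"

definition realizes :: "'s tile set \<Rightarrow> ('v, 'e) mgraph \<Rightarrow> bool" where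
  "realizes P G \<longleftrightarrow> (\<exists>lam. assembly_design G lam \<and> tile_at G lam ` verts G \<subseteq> P)"

definition T1 :: "('v, 'e) mgraph \<Rightarrow> nat" where
  "T1 G = (LEAST k. \<exists>P :: nat tile set. pot P \<and> realizes P G \<and> card P = k)"

definition tube_graph :: "nat \<Rightarrow> nat \<Rightarrow> (nat \<times> nat, (nat \<times> nat) \<times> (nat \<times> nat)) mgraph" where
  "tube_graph m n =
    \<lparr> verts = {(i, j). i < n - 1 \<and> 1 \<le> j \<and> j \<le> m},
      edges = {((i, j), ((i + 1) mod (n - 1), j)) | i j. i < n - 1 \<and> 1 \<le> j \<and> j \<le> m}
            \<union> {((i, j), (i, j + 1)) | i j. i < n - 1 \<and> 1 \<le> j \<and> j < m}
            \<union> {((i, j), ((i + 1) mod (n - 1), j + 1)) | i j. i < n - 1 \<and> 1 \<le> j \<and> j < m},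
      ends = id \<rparr>"

end

theory Submission imports Defs begin

lemma pred_mod:
  fixes N i i' :: nat assumes "N \<ge> 2" "i < N" "i' < N"
  shows "((i' + 1) mod N = i) \<longleftrightarrow> i' = (if i = 0 then N - 1 else i - 1)"
  using assms
  by (cases "i' + 1 = N") (auto simp: mod_if)

lemma star_set:
  assumes "n \<ge> 4" "i < n - 1" "1 \<le> j" "j \<le> m"
  defines "N \<equiv> n - 1"
  defines "p \<equiv> (i + 1) mod N"
  defines "q \<equiv> (if i = 0 then N - 1 else i - 1)"
  shows "{h. fst h \<in> edges (tube_graph m n) \<and> hend (tube_graph m n) h = (i,j)} =
    {(((i,j),(p,j)),False), (((q,j),(i,j)),True)}
    \<union> (if j < m then {(((i,j),(i,j+1)),False), (((i,j),(p,j+1)),False)} else {})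
    \<union> (if 1 < j then {(((i,j-1),(i,j)),True), (((q,j-1),(i,j)),True)} else {})"
  (is "?L = ?R")
proof
  have N2: "N \<ge> 2" using assms unfolding N_def by auto
  have iN: "i < N" using assms unfolding N_def by auto
  have qN: "q < N" using N2 iN unfolding q_def by auto
  have pm: "\<And>i'. i' < N \<Longrightarrow> ((i' + 1) mod N = i) \<longleftrightarrow> i' = q"
    using pred_mod[OF N2 iN] unfolding q_def by blast
  have qp: "(q + 1) mod N = i" using pm qN by blast
  show "?L \<subseteq> ?R"
  proof
    fix h assume "h \<in> ?L"
    then obtain e b where h: "h = (e,b)" "e \<in> edges (tube_graph m n)" "hend (tube_graph m n) (e,b) = (i,j)"
      by (cases h) auto
    show "h \<in> ?R"
    proof (cases b)
      case True
      then show ?thesis using h pm unfolding tube_graph_def hend_def N_def[symmetric]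
        by auto
    next
      case False
      then show ?thesis using h unfolding tube_graph_def hend_def N_def[symmetric] p_def
        by auto
    qed
  qed
  show "?R \<subseteq> ?L"
    using assms qN qp iN unfolding tube_graph_def hend_def N_def[symmetric] p_def
    by (auto split: if_splits) 
qed


definition hl :: "nat \<Rightarrow> nat \<Rightarrow> nat \<Rightarrow> nat \<Rightarrow> nat \<Rightarrow> nat \<Rightarrow> (((nat \<times> nat) \<times> (nat \<times> nat)) \<times> bool) list" where
  "hl m i j p q x = [(((i,j),(p,j)),False), (((q,j),(i,j)),True)]
    @ (if j < m then [(((i,j),(i,j+1)),False), (((i,j),(p,j+1)),False)] else [])
    @ (if 1 < j then [(((i,j-1),(i,j)),True), (((q,j-1),(i,j)),True)] else [])"

definition lamT :: "((nat \<times> nat) \<times> (nat \<times> nat)) \<times> bool \<Rightarrow> nat cend" where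
  "lamT h = (let x = (if fst (fst (fst h)) \<noteq> fst (snd (fst h)) \<and> snd (fst (fst h)) \<noteq> snd (snd (fst h))
        then Hat 0 else Sym 0) in if snd h then hat x else x)"

lemma tile_expl:
  assumes "n \<ge> 4" "i < n - 1" "1 \<le> j" "j \<le> m"
  defines "N \<equiv> n - 1"
  defines "p \<equiv> (i + 1) mod N"
  defines "q \<equiv> (if i = 0 then N - 1 else i - 1)"
  shows "tile_at (tube_graph m n) lam (i,j) = mset (map lam (hl m i j p q 0))"
proof -
  have N2: "N \<ge> 2" using assms unfolding N_def by auto
  have iN: "i < N" using assms unfolding N_def by auto
  have pi: "p \<noteq> i" using N2 iN unfolding p_def by (auto simp: mod_if)
  have qi: "q \<noteq> i" using N2 iN unfolding q_def by auto
  have S: "{h. fst h \<in> edges (tube_graph m n) \<and> hend (tube_graph m n) h = (i,j)} = set (hl m i j p q 0)"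
    unfolding star_set[OF assms(1-4)] hl_def N_def[symmetric] p_def[symmetric] q_def[symmetric]
    by auto
  have D: "distinct (hl m i j p q 0)"
    using pi qi assms(3) unfolding hl_def by auto
  show ?thesis unfolding tile_at_def S mset_set_set[OF D] by simp
qed

lemma lam_tiles:
  assumes "n \<ge> 4" "i < n - 1" "1 \<le> j" "j \<le> m" "m \<ge> 2"
  defines "N \<equiv> n - 1"
  defines "p \<equiv> (i + 1) mod N"
  defines "q \<equiv> (if i = 0 then N - 1 else i - 1)"
  shows "mset (map lamT (hl m i j p q 0)) \<in> {{#Sym 0, Sym 0, Hat 0, Hat 0#}, {#Sym 0, Sym 0, Sym 0, Hat 0, Hat 0, Hat 0#}}"
proof -
  have N2: "N \<ge> 2" using assms unfolding N_def by auto
  have iN: "i < N" using assms unfolding N_def by auto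
  have pi: "p \<noteq> i" using N2 iN unfolding p_def by (auto simp: mod_if)
  have qi: "q \<noteq> i" using N2 iN unfolding q_def by auto
  show ?thesis using pi qi assms(3,4,5) unfolding hl_def lamT_def
    by (auto simp: Let_def add_mset_commute)
qed


theorem proposition8:
  fixes m n :: nat
  assumes "n \<ge> 4" and "m \<ge> 3"
  shows "T1 (tube_graph m n) = 2"
proof -
  let ?G = "tube_graph m n"
  define A4 :: "nat tile" where "A4 = {#Sym 0, Sym 0, Hat 0, Hat 0#}"
  define A6 :: "nat tile" where "A6 = {#Sym 0, Sym 0, Sym 0, Hat 0, Hat 0, Hat 0#}"
  define P0 where "P0 = {A4, A6}"
  have ne: "A4 \<noteq> A6" unfolding A4_def A6_def by auto
  have c2: "card P0 = 2" unfolding P0_def using ne by simp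
  have pot0: "pot P0" unfolding pot_def P0_def A4_def A6_def by auto
  have ad: "assembly_design ?G lamT"
    unfolding assembly_design_def lamT_def by (auto simp: Let_def)
  have sub: "tile_at ?G lamT ` verts ?G \<subseteq> P0"
  proof
    fix t assume "t \<in> tile_at ?G lamT ` verts ?G"
    then obtain i j where ij: "i < n - 1" "1 \<le> j" "j \<le> m" "t = tile_at ?G lamT (i,j)"
      unfolding tube_graph_def by auto
    show "t \<in> P0"
      using tile_expl[OF assms(1) ij(1-3), of lamT] lam_tiles[OF assms(1) ij(1-3)] assms(2) ij(4)
      unfolding P0_def A4_def A6_def by auto
  qed
  have r0: "realizes P0 ?G" unfolding realizes_def using ad sub by blast
  have lb: "2 \<le> k" if ex: "\<exists>P :: nat tile set. pot P \<and> realizes P ?G \<and> card P = k" for k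
  proof -
    obtain P :: "nat tile set" where P: "pot P" "realizes P ?G" "card P = k" using ex by blast
    obtain lam where lam: "tile_at ?G lam ` verts ?G \<subseteq> P" using P(2) unfolding realizes_def by blast
    have v1: "(0,1) \<in> verts ?G" "(0,2) \<in> verts ?G" using assms unfolding tube_graph_def by auto
    have s1: "size (tile_at ?G lam (0,1)) = 4"
      using tile_expl[OF assms(1), of 0 1 m lam] assms unfolding hl_def by simp
    have s2: "size (tile_at ?G lam (0,2)) = 6"
      using tile_expl[OF assms(1), of 0 2 m lam] assms unfolding hl_def by simp
    have "tile_at ?G lam (0,1) \<noteq> tile_at ?G lam (0,2)" using s1 s2 by auto
    moreover have "{tile_at ?G lam (0,1), tile_at ?G lam (0,2)} \<subseteq> P" using lam v1 by blast
    moreover have "finite P" using P(1) unfolding pot_def by blast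
    ultimately have "card {tile_at ?G lam (0,1), tile_at ?G lam (0,2)} \<le> card P"
      by (meson card_mono)
    then show ?thesis using P(3) \<open>tile_at ?G lam (0,1) \<noteq> tile_at ?G lam (0,2)\<close> by simp
  qed
  show ?thesis unfolding T1_def
    by (rule Least_equality) (use pot0 r0 c2 lb in blast)+
qed

end
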